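(* For every $0<p<3$ and every $q\ge0$ there exists $C(p,q)>0$ such that $$\int_{\mathbb R^3}|G(v,v')|^p\frac{dv'}{(1+|v'-u_1|)^q}\le\frac{C(p,q)}{(1+|v-u_1|)^{q+1}}\qquad\text{for all }v\in\mathbb R^3.$$
   Context: Fix masses $m,m_1>0$, a constant restitution coefficient $\epsilon\in(0,1)$, a bulk velocity $u_1\in\mathbb R^3$ and a temperature $\vartheta_1>0$. Set $\alpha=\frac{m_1}{m+m_1}$, $\beta=\frac{1-\epsilon}{2}$, $\mu=\frac{1-2\alpha(1-\beta)}{\alpha(1-\beta)}$ (so $1+\mu>0$), and $G(v,v')=\big(\frac{m_1}{2\pi\vartheta_1}\big)^{1/2}|v-v'|^{-1}\exp\big\{-\frac{m_1}{8\vartheta_1}\big((1+\mu)^2|v-v'|^2+\frac{(|v-u_1|^2-|v'-u_1|^2)^2}{|v-v'|^2}\big)\big\}$ for $v\neq v'$. *)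

theory Defs
  imports "HOL-Analysis.Analysis"
begin

definition alpha_c :: "real \<Rightarrow> real \<Rightarrow> real" where
  "alpha_c m m1 = m1 / (m + m1)"

definition beta_c :: "real \<Rightarrow> real" where
  "beta_c \<epsilon> = (1 - \<epsilon>) / 2"

definition mu_c :: "real \<Rightarrow> real \<Rightarrow> real \<Rightarrow> real" where
  "mu_c m m1 \<epsilon> =
     (1 - 2 * alpha_c m m1 * (1 - beta_c \<epsilon>)) / (alpha_c m m1 * (1 - beta_c \<epsilon>))"

text \<open>The kernel G(v,v'); it is only defined for v \<noteq> v' in the paper, we set it to 0 on
  the (null) diagonal.\<close>
definition G_kernel :: "real \<Rightarrow> real \<Rightarrow> real \<Rightarrow> real^3 \<Rightarrow> real \<Rightarrow> real^3 \<Rightarrow> real^3 \<Rightarrow> real" where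
  "G_kernel m m1 \<epsilon> u1 \<theta>1 v v' =
    (if v = v' then 0 else
     sqrt (m1 / (2 * pi * \<theta>1)) / norm (v - v') *
     exp (- (m1 / (8 * \<theta>1)) *
          ((1 + mu_c m m1 \<epsilon>)\<^sup>2 * (norm (v - v'))\<^sup>2
           + ((norm (v - u1))\<^sup>2 - (norm (v' - u1))\<^sup>2)\<^sup>2 / (norm (v - v'))\<^sup>2)))"

end

theory Submission
  imports Defs "HOL-Real_Asymp.Real_Asymp"
begin

lemma prod_UNIV_3: "prod f (UNIV::3 set) = f 1 * f 2 * f 3"
  unfolding UNIV_3 by (simp add: ac_simps)

lemma ball_meas:
  fixes v :: "real^3" and R :: real
  assumes R: "R \<ge> 0"
  shows "emeasure lborel {y. norm (v - y) \<le> R} \<le> ennreal (8 * R^3)"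
proof -
  define l :: "real^3" where "l = v - (\<chi> i. R)"
  define u :: "real^3" where "u = v + (\<chi> i. R)"
  have sub: "{y. norm (v - y) \<le> R} \<subseteq> cbox l u"
  proof
    fix y assume "y \<in> {y. norm (v - y) \<le> R}"
    then have nr: "norm (v - y) \<le> R" by simp
    have "\<bar>v$i - y$i\<bar> \<le> R" for i
      using component_le_norm_cart[of "v - y" i] nr by simp
    then show "y \<in> cbox l u" unfolding mem_box_cart l_def u_def
      by (auto simp: abs_le_iff algebra_simps)
  qed
  have "v \<in> cbox l u" unfolding mem_box_cart l_def u_def using R by auto
  then have ne: "cbox l u \<noteq> {}" by blast
  have "emeasure lborel {y. norm (v - y) \<le> R} \<le> emeasure lborel (cbox l u)"
    by (rule emeasure_mono[OF sub]) simp
  also have "\<dots> = ennreal (measure lborel (cbox l u))"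
    using emeasure_lborel_cbox_finite[of l u] by (intro emeasure_eq_ennreal_measure) simp
  also have "measure lborel (cbox l u) = 8 * R^3"
    using content_cbox_cart[OF ne] by (simp add: prod_UNIV_3 l_def u_def power3_eq_cube)
  finally show ?thesis .
qed

lemma slab_measure:
  fixes v c :: "real^3" and R K :: real
  assumes R: "R > 0" and K: "K \<ge> 0" and vc: "v \<noteq> c"
  shows "emeasure lborel {y. norm (v - y) \<le> R \<and> \<bar>(norm (v - c))\<^sup>2 - (norm (y - c))\<^sup>2\<bar> \<le> K}
         \<le> ennreal (4 * R^2 * (2*K + R^2) / (2 * norm (v - c)))"
proof -
  define x where "x = v - c"
  define t where "t = norm x"
  have t: "t > 0" using vc by (simp add: t_def x_def)
  have n1: "norm ((1/t) *\<^sub>R x) = 1" using t by (simp add: t_def)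
  obtain f :: "real^3 \<Rightarrow> real^3" where f: "orthogonal_transformation f" and fe: "f (axis (1::3) (1::real)) = (1/t) *\<^sub>R x"
    using orthogonal_transformation_exists_1[OF norm_axis_1 n1] by blast
  define l :: "real^3" where "l = vector [-(K + R^2)/(2*t), -R, -R]"
  define u :: "real^3" where "u = vector [K/(2*t), R, R]"
  define B where "B = cbox l u"
  define S where "S = (+) v ` (f ` B)"
  let ?E = "{y. norm (v - y) \<le> R \<and> \<bar>(norm (v - c))\<^sup>2 - (norm (y - c))\<^sup>2\<bar> \<le> K}"
  have sub: "?E \<subseteq> S"
  proof
    fix y assume y: "y \<in> ?E"
    obtain z where z: "f z = y - v"
      using orthogonal_transformation_surj[OF f] by (metis surjD)
    have nz: "norm z = norm (v - y)"
      using orthogonal_transformation_norm[OF f, of z] z by (simp add: norm_minus_commute)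
    have xt: "x = t *\<^sub>R f (axis (1::3) (1::real))" using t fe by simp
    have xw: "x \<bullet> (y - v) = t * z $ 1"
      using f unfolding xt z[symmetric] orthogonal_transformation_def
      by (simp add: inner_axis')
    have "(norm (y - c))\<^sup>2 = (norm (x + (y - v)))\<^sup>2" by (simp add: x_def algebra_simps)
    also have "\<dots> = (norm x)\<^sup>2 + 2 * (x \<bullet> (y - v)) + (norm (y - v))\<^sup>2"
      by (simp add: power2_norm_eq_inner inner_add_left inner_add_right inner_commute)
    finally have "(norm (y - c))\<^sup>2 = t^2 + 2 * (t * z$1) + (norm z)^2"
      using xw nz by (simp add: t_def norm_minus_commute)
    moreover have "(norm (v - c))\<^sup>2 = t^2" by (simp add: t_def x_def)
    ultimately have h: "\<bar>2 * t * z$1 + (norm z)^2\<bar> \<le> K" using y by auto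
    have nR: "norm z \<le> R" using y nz by simp
    have "(norm z)^2 \<le> R^2" using nR by (simp add: power_mono)
    then have z1a: "2 * t * z$1 \<le> K" and z1b: "-(K + R^2) \<le> 2 * t * z$1"
    proof -
      have h2: "2*t*z$1 + (norm z)^2 \<le> K \<and> -K \<le> 2*t*z$1 + (norm z)^2"
        using h by (simp add: abs_le_iff)
      show "2 * t * z$1 \<le> K" "-(K + R^2) \<le> 2 * t * z$1"
        using h2 \<open>(norm z)^2 \<le> R^2\<close> zero_le_power2[of "norm z"] by linarith+
    qed
    have c2: "-R \<le> z$2 \<and> z$2 \<le> R" using component_le_norm_cart[of z 2] nR by linarith
    have c3: "-R \<le> z$3 \<and> z$3 \<le> R" using component_le_norm_cart[of z 3] nR by linarith
    have c1: "z$1 \<le> K/(2*t)" using z1a t by (simp add: pos_le_divide_eq mult.commute mult.left_commute)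
    have c1': "-(K + R^2)/(2*t) \<le> z$1" using z1b t by (simp add: pos_divide_le_eq mult.commute mult.left_commute)
    have "z \<in> B"
      unfolding B_def mem_box_cart forall_3 l_def u_def vector_3
      using c1 c1' c2 c3 by simp
    then show "y \<in> S" unfolding S_def using z by (metis add.commute diff_add_cancel image_eqI)
  qed
  have Bne: "B \<noteq> {}"
  proof -
    have "- (R^2) \<le> 2 * K" using K zero_le_power2[of R] by linarith
    then have "l \<in> B" unfolding B_def mem_box_cart forall_3 l_def u_def using t R K
      by (auto simp: divide_simps)
    then show ?thesis by blast
  qed
  have cB: "measure lborel B = (K/(2*t) + (K+R^2)/(2*t)) * (2*R) * (2*R)"
    using content_cbox_cart[of l u] Bne t unfolding B_def by (simp add: prod_UNIV_3 l_def u_def minus_divide_left)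
  have Bm: "B \<in> lmeasurable" by (simp add: B_def)
  have fBm: "f ` B \<in> lmeasurable" "measure lebesgue (f ` B) = measure lebesgue B"
    using measurable_orthogonal_image[OF f Bm] measure_orthogonal_image[OF f Bm] by auto
  have Sm: "S \<in> lmeasurable" unfolding S_def using measurable_translation[OF fBm(1)] .
  have mS: "measure lebesgue S = measure lborel B"
    unfolding S_def measure_translation fBm(2) by (simp add: B_def)
  have lin: "linear f" using f orthogonal_transformation_linear by blast
  have "compact (f ` B)"
  proof -
    have bl: "bounded_linear f" using lin linear_conv_bounded_linear by auto
    show ?thesis by (rule compact_continuous_image[OF linear_continuous_on[OF bl]]) (simp add: B_def)
  qed
  then have Sc: "compact S" unfolding S_def by (rule compact_translation)
  then have Sb: "S \<in> sets lborel" by (simp add: borel_compact)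
  have "emeasure lborel ?E \<le> emeasure lborel S"
    by (rule emeasure_mono[OF sub Sb])
  also have "\<dots> = emeasure lebesgue S"
    using Sb by (simp add: emeasure_completion)
  also have "\<dots> = ennreal (measure lebesgue S)"
    using Sm by (simp add: emeasure_eq_measure2)
  also have "\<dots> = ennreal (4 * R^2 * (2*K + R^2) / (2 * norm (v - c)))"
  proof -
    have "(K/(2*t) + (K+R^2)/(2*t)) * (2*R) * (2*R) = 4 * R^2 * (2*K + R^2) / (2 * t)"
      using t by (simp add: add_divide_distrib[symmetric] power2_eq_square)
    then show ?thesis unfolding mS cB by (simp add: t_def x_def)
  qed
  finally show ?thesis .
qed

lemma summ_poly_exp:
  fixes a :: real assumes a: "a > 0"
  shows "summable (\<lambda>n::nat. real (n+2)^4 * exp (- a * real (n+1)))"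
proof -
  have "((\<lambda>n::nat. real (n+2)^4 * exp (- a * real (n+1)) * (real (n+1))^2) \<longlongrightarrow> 0) sequentially"
    using a by real_asymp
  from order_tendstoD(2)[OF this, of 1]
  obtain N where N: "\<And>n. n \<ge> N \<Longrightarrow> real (n+2)^4 * exp (- a * real (n+1)) * (real (n+1))^2 < 1"
    by (auto simp: eventually_sequentially)
  show ?thesis
  proof (rule summable_comparison_test'[where N="N+1"])
    show "summable (\<lambda>n. inverse (real n ^ 2))" by (rule inverse_power_summable) simp
    fix n assume n: "n \<ge> N + 1"
    have pos: "(real (n+1))^2 > 0" by simp
    have "real (n+2)^4 * exp (- a * real (n+1)) < 1 / (real (n+1))^2"
      using N[of n] n pos by (simp add: field_simps)
    also have "1 / (real (n+1))^2 \<le> 1 / (real n)^2"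
      using n by (intro divide_left_mono mult_pos_pos power_mono) auto
    finally show "norm (real (n+2)^4 * exp (- a * real (n+1))) \<le> inverse (real n ^ 2)"
      by (simp add: divide_inverse)
  qed
qed

lemma summ_poly_exp_k:
  fixes a :: real assumes a: "a > 0" and k: "k \<le> 4"
  shows "summable (\<lambda>n::nat. exp (- a * real (n+1)) * (real n + 2)^k)"
proof (rule summable_comparison_test'[where N=0, OF summ_poly_exp[OF a]])
  fix n :: nat
  have "(real n + 2)^k \<le> (real n + 2)^4" by (rule power_increasing[OF k]) simp
  then show "norm (exp (- a * real (n+1)) * (real n + 2)^k) \<le> real (n+2)^4 * exp (- a * real (n+1))"
    by (simp add: mult.commute add.commute)
qed

lemma summ_gauss:
  fixes b :: real assumes b: "b > 0"
  shows "summable (\<lambda>j::nat. real (j+1) * exp (- b * (real j)^2))"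
proof (rule summable_comparison_test'[where N=0])
  show "summable (\<lambda>j::nat. exp b * (real (j+2)^4 * exp (- b * real (j+1))))"
    by (rule summable_mult[OF summ_poly_exp[OF b]])
  fix j :: nat
  have j1: "real (j+1) \<le> real (j+2)^4"
  proof -
    have "real (j+1) \<le> real (j+2)" by simp
    also have "real (j+2) = real (j+2)^1" by simp
    also have "\<dots> \<le> real (j+2)^4" by (rule power_increasing) auto
    finally show ?thesis .
  qed
  have "real j \<le> (real j)^2"
    by (cases j) (auto simp: power2_eq_square)
  then have "- b * (real j)^2 \<le> b + (- b * real (j+1))" using b by (simp add: algebra_simps)
  then have e: "exp (- b * (real j)^2) \<le> exp b * exp (- b * real (j+1))"
    by (simp add: exp_add[symmetric])
  have "real (j+1) * exp (- b * (real j)^2) \<le> real (j+2)^4 * (exp b * exp (- b * real (j+1)))"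
    by (rule mult_mono[OF j1 e]) auto
  then show "norm (real (j+1) * exp (- b * (real j)^2)) \<le> exp b * (real (j+2)^4 * exp (- b * real (j+1)))"
    by (simp add: algebra_simps)
qed

lemma summ_gauss0:
  fixes b :: real assumes b: "b > 0"
  shows "summable (\<lambda>j::nat. exp (- b * (real j)^2))"
proof (rule summable_comparison_test'[where N=0, OF summ_gauss[OF b]])
  fix j :: nat
  show "norm (exp (- b * (real j)^2)) \<le> real (j+1) * exp (- b * (real j)^2)"
    by simp
qed

lemma half_pow_powr: "((1/2::real)^k) powr (-p) = (2 powr p)^k"
proof -
  have h1: "(1/2::real)^k = inverse (2 powr real k)"
  proof -
    have "(1/2::real)^k = inverse (2^k)" by (simp only: power_one_over inverse_eq_divide)
    also have "(2::real)^k = 2 powr real k" by (rule powr_realpow[symmetric]) simp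
    finally show ?thesis .
  qed
  have "((1/2::real)^k) powr (-p) = inverse (inverse ((2 powr real k) powr p))"
    unfolding h1 inverse_powr powr_minus by simp
  also have "\<dots> = 2 powr (real k * p)" by (simp add: powr_powr)
  also have "\<dots> = (2 powr p) powr real k" by (simp add: powr_powr mult.commute)
  also have "\<dots> = (2 powr p)^k" by (rule powr_realpow) simp
  finally show ?thesis .
qed

lemma summ_geom_k:
  fixes p :: real assumes p: "p < 3" and k: "k \<ge> 3"
  shows "summable (\<lambda>n::nat. (2 powr p)^(n+1) * ((1/2)^n)^k)"
proof -
  have eq: "(2 powr p)^(n+1) * ((1/2::real)^n)^k = 2 powr p * (2 powr p * (1/2)^k)^n" for n
    by (simp add: power_mult_distrib power_mult[symmetric] mult.commute)
  have "2 powr p < 2 powr 3" using p by (intro powr_less_mono) auto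
  then have lt8: "2 powr p < 8" by simp
  have "(1/2::real)^k \<le> (1/2)^3" using k by (intro power_decreasing) auto
  then have "2 powr p * (1/2::real)^k \<le> 2 powr p * (1/2)^3" by (intro mult_left_mono) auto
  also have "\<dots> < 1"
  proof -
    have "(1/2::real)^3 = 1/8" by (simp add: power_one_over)
    then show ?thesis using lt8 by (simp add: power_one_over)
  qed
  finally have r: "norm (2 powr p * (1/2::real)^k) < 1" by simp
  show ?thesis unfolding eq by (intro summable_mult summable_geometric r)
qed


definition Phi :: "real \<Rightarrow> real \<Rightarrow> real^3 \<Rightarrow> real^3 \<Rightarrow> real^3 \<Rightarrow> real" where
  "Phi b R c v y = (if y = v \<or> R < norm (v - y) then 0
     else exp (- b * ((norm (v - c))\<^sup>2 - (norm (y - c))\<^sup>2)\<^sup>2 / (norm (v - y))\<^sup>2))"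

lemma Phi_meas[measurable]: "Phi b R c v \<in> borel_measurable lborel"
  unfolding Phi_def by measurable

lemma term_le_suminf_ennreal: "(f::nat \<Rightarrow> ennreal) n \<le> suminf f"
  using sum_le_suminf[of f "{n}"] by simp

lemma Phi_bound1:
  assumes R: "R \<ge> 0" and b: "b \<ge> 0"
  shows "(\<integral>\<^sup>+y. ennreal (Phi b R c v y) \<partial>lborel) \<le> ennreal (8 * R^3)"
proof -
  have "(\<integral>\<^sup>+y. ennreal (Phi b R c v y) \<partial>lborel) \<le> (\<integral>\<^sup>+y. indicator {y. norm (v - y) \<le> R} y \<partial>lborel)"
  proof (rule nn_integral_mono)
    fix y
    have "- b * ((norm (v - c))\<^sup>2 - (norm (y - c))\<^sup>2)\<^sup>2 / (norm (v - y))\<^sup>2 \<le> 0"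
      using b by (intro divide_nonpos_nonneg mult_nonpos_nonneg) auto
    then have "Phi b R c v y \<le> indicator {y. norm (v - y) \<le> R} y"
      by (auto simp: Phi_def indicator_def not_less)
    from ennreal_leI[OF this] show "ennreal (Phi b R c v y) \<le> indicator {y. norm (v - y) \<le> R} y"
      by (simp add: ennreal_indicator)
  qed
  also have "\<dots> = emeasure lborel {y. norm (v - y) \<le> R}"
    by (rule nn_integral_indicator) measurable
  also have "\<dots> \<le> ennreal (8 * R^3)" by (rule ball_meas[OF R])
  finally show ?thesis .
qed

definition S0 :: "real \<Rightarrow> real" where "S0 b = (\<Sum>j. exp (- b * (real j)\<^sup>2))"
definition S1 :: "real \<Rightarrow> real" where "S1 b = (\<Sum>j. real (j+1) * exp (- b * (real j)\<^sup>2))"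

lemma S0_nonneg: "b > 0 \<Longrightarrow> S0 b \<ge> 0"
  unfolding S0_def by (intro suminf_nonneg summ_gauss0) auto

lemma S1_nonneg: "b > 0 \<Longrightarrow> S1 b \<ge> 0"
  unfolding S1_def by (intro suminf_nonneg summ_gauss) auto

lemma Phi_bound2:
  assumes R: "R > 0" and b: "b > 0" and vc: "v \<noteq> c"
  shows "(\<integral>\<^sup>+y. ennreal (Phi b R c v y) \<partial>lborel)
           \<le> ennreal ((4 * S1 b / norm (v - c)) * R^3 + (2 * S0 b / norm (v - c)) * R^4)"
proof -
  define t where "t = norm (v - c)"
  have t: "t > 0" using vc by (simp add: t_def)
  define e where "e j = exp (- b * (real j)\<^sup>2)" for j :: nat
  define E where "E j = {y. norm (v - y) \<le> R \<and> \<bar>(norm (v - c))\<^sup>2 - (norm (y - c))\<^sup>2\<bar> \<le> real (j+1) * R}" for j :: nat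
  have Em[measurable]: "E j \<in> sets lborel" for j unfolding E_def by measurable
  have pw: "ennreal (Phi b R c v y) \<le> (\<Sum>j. ennreal (e j) * indicator (E j) y)" for y
  proof (cases "y = v \<or> R < norm (v - y)")
    case True then show ?thesis by (simp add: Phi_def)
  next
    case False
    define s where "s = norm (v - y)"
    define X where "X = (norm (v - c))\<^sup>2 - (norm (y - c))\<^sup>2"
    define z where "z = \<bar>X\<bar> / s"
    have s: "s > 0" "s \<le> R" using False by (auto simp: s_def)
    have z0: "z \<ge> 0" using s by (simp add: z_def)
    define j where "j = nat \<lfloor>z\<rfloor>"
    have jr: "real j = of_int \<lfloor>z\<rfloor>" using z0 by (simp add: j_def)
    have jz: "real j \<le> z" "z < real j + 1"
      unfolding jr by (simp_all add: of_int_floor_le real_of_int_floor_add_one_gt)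
    have "- b * X\<^sup>2 / s\<^sup>2 = - b * z\<^sup>2" by (simp add: z_def power_divide)
    then have Phi_eq: "Phi b R c v y = exp (- b * z\<^sup>2)"
      using False by (simp add: Phi_def X_def s_def)
    have "(real j)\<^sup>2 \<le> z\<^sup>2" using jz by (intro power_mono) auto
    then have le1: "Phi b R c v y \<le> e j" unfolding Phi_eq e_def using b by simp
    have "\<bar>X\<bar> = z * s" using s by (simp add: z_def)
    also have "\<dots> \<le> (real j + 1) * s" using jz s by (intro mult_right_mono) auto
    also have "\<dots> \<le> (real j + 1) * R" using s by (intro mult_left_mono) auto
    finally have "y \<in> E j" using s by (simp add: E_def X_def s_def add.commute)
    then have "ennreal (Phi b R c v y) \<le> ennreal (e j) * indicator (E j) y"
      using ennreal_leI[OF le1] by simp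
    also have "\<dots> \<le> (\<Sum>j. ennreal (e j) * indicator (E j) y)"
      by (rule term_le_suminf_ennreal)
    finally show ?thesis .
  qed
  define w where "w j = e j * ((4 * real (j+1) * R^3 + 2 * R^4) / t)" for j
  have wsums: "w sums ((4 * S1 b / t) * R^3 + (2 * S0 b / t) * R^4)"
  proof -
    have "(\<lambda>j. (4 * R^3 / t) * (real (j+1) * e j) + (2 * R^4 / t) * e j) sums
            ((4 * R^3 / t) * S1 b + (2 * R^4 / t) * S0 b)"
      unfolding S0_def S1_def e_def
      by (intro sums_add sums_mult summable_sums summ_gauss summ_gauss0 b)
    moreover have "(\<lambda>j. (4 * R^3 / t) * (real (j+1) * e j) + (2 * R^4 / t) * e j) = w"
      using t by (intro ext) (simp add: w_def field_simps)
    ultimately have "w sums ((4 * R^3 / t) * S1 b + (2 * R^4 / t) * S0 b)" by simp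
    moreover have "(4 * R^3 / t) * S1 b + (2 * R^4 / t) * S0 b = (4 * S1 b / t) * R^3 + (2 * S0 b / t) * R^4"
      using t by (simp add: field_simps)
    ultimately show ?thesis by simp
  qed
  have "(\<integral>\<^sup>+y. ennreal (Phi b R c v y) \<partial>lborel) \<le> (\<integral>\<^sup>+y. (\<Sum>j. ennreal (e j) * indicator (E j) y) \<partial>lborel)"
    by (rule nn_integral_mono) (rule pw)
  also have "\<dots> = (\<Sum>j. \<integral>\<^sup>+y. ennreal (e j) * indicator (E j) y \<partial>lborel)"
    by (rule nn_integral_suminf) measurable
  also have "\<dots> = (\<Sum>j. ennreal (e j) * emeasure lborel (E j))"
    by (rule arg_cong[where f=suminf], rule ext, rule nn_integral_cmult_indicator[OF Em])
  also have "\<dots> \<le> (\<Sum>j. ennreal (w j))"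
  proof (rule suminf_le)
    fix j
    have "emeasure lborel (E j) \<le> ennreal (4 * R^2 * (2 * (real (j+1) * R) + R^2) / (2 * norm (v - c)))"
      unfolding E_def by (rule slab_measure) (use R vc in auto)
    also have "4 * R^2 * (2 * (real (j+1) * R) + R^2) / (2 * norm (v - c)) = (4 * real (j+1) * R^3 + 2 * R^4) / t"
    proof -
      have "4 * R^2 * (2 * (real (j+1) * R) + R^2) = 2 * (4 * real (j+1) * R^3 + 2 * R^4)"
        by (simp add: algebra_simps eval_nat_numeral)
      then show ?thesis using t by (simp add: t_def field_simps)
    qed
    finally have m: "emeasure lborel (E j) \<le> ennreal ((4 * real (j+1) * R^3 + 2 * R^4) / t)" .
    have "ennreal (e j) * emeasure lborel (E j) \<le> ennreal (e j) * ennreal ((4 * real (j+1) * R^3 + 2 * R^4) / t)"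
      by (rule mult_left_mono[OF m]) simp
    also have "\<dots> = ennreal (w j)" unfolding w_def by (rule ennreal_mult'[symmetric]) (simp add: e_def)
    finally show "ennreal (e j) * emeasure lborel (E j) \<le> ennreal (w j)" .
  qed auto
  also have "\<dots> = ennreal (\<Sum>j. w j)"
    using R t by (intro suminf_ennreal2 sums_summable[OF wsums]) (auto simp: w_def e_def)
  also have "(\<Sum>j. w j) = (4 * S1 b / t) * R^3 + (2 * S0 b / t) * R^4"
    using wsums by (simp add: sums_iff)
  finally show ?thesis by (simp add: t_def)
qed

definition Hk :: "real \<Rightarrow> real \<Rightarrow> real \<Rightarrow> real^3 \<Rightarrow> real^3 \<Rightarrow> real^3 \<Rightarrow> real" where
  "Hk a b p c v y = (if y = v then 0 else norm (v - y) powr (-p) * exp (- a * (norm (v - y))\<^sup>2)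
      * exp (- b * ((norm (v - c))\<^sup>2 - (norm (y - c))\<^sup>2)\<^sup>2 / (norm (v - y))\<^sup>2))"

lemma Hk_meas[measurable]: "Hk a b p c v \<in> borel_measurable lborel"
  unfolding Hk_def by measurable

definition Ak :: "real \<Rightarrow> nat \<Rightarrow> real" where
  "Ak p k = (\<Sum>n. (2 powr p)^(n+1) * ((1/2::real)^n)^k)"
definition Bk :: "real \<Rightarrow> nat \<Rightarrow> real" where
  "Bk a k = (\<Sum>n. exp (- a * real (n+1)) * (real n + 2)^k)"

lemma Ak_nonneg: "p < 3 \<Longrightarrow> 3 \<le> k \<Longrightarrow> Ak p k \<ge> 0"
  unfolding Ak_def by (intro suminf_nonneg summ_geom_k) auto

lemma Bk_nonneg: "a > 0 \<Longrightarrow> k \<le> 4 \<Longrightarrow> Bk a k \<ge> 0"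
  unfolding Bk_def by (intro suminf_nonneg summ_poly_exp_k) auto

lemma core_general:
  fixes c v :: "real^3"
  assumes a: "a > 0" and b: "b > 0" and p: "0 < p" "p < 3" and c3: "c3 \<ge> 0" and c4: "c4 \<ge> 0"
    and hyp: "\<And>R. R > 0 \<Longrightarrow> (\<integral>\<^sup>+y. ennreal (Phi b R c v y) \<partial>lborel) \<le> ennreal (c3 * R^3 + c4 * R^4)"
  shows "(\<integral>\<^sup>+y. ennreal (Hk a b p c v y) \<partial>lborel) \<le> ennreal (c3 * (Ak p 3 + Bk a 3) + c4 * (Ak p 4 + Bk a 4))"
proof -
  define al where "al n = (2 powr p)^(n+1)" for n :: nat
  define be where "be n = exp (- a * real (n+1))" for n :: nat
  define ri where "ri n = (1/2::real)^n" for n :: nat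
  define ro where "ro n = real n + 2" for n :: nat
  define F where "F n y = ennreal (al n) * ennreal (Phi b (ri n) c v y)" for n y
  define G where "G n y = ennreal (be n) * ennreal (Phi b (ro n) c v y)" for n y
  have al0: "al n \<ge> 0" for n by (simp add: al_def)
  have be0: "be n \<ge> 0" for n by (simp add: be_def)
  have ri0: "ri n > 0" for n by (simp add: ri_def)
  have ro0: "ro n > 0" for n by (simp add: ro_def)
  have pw: "ennreal (Hk a b p c v y) \<le> (\<Sum>n. F n y) + (\<Sum>n. G n y)" for y
  proof (cases "y = v")
    case True then show ?thesis by (simp add: Hk_def)
  next
    case False
    define s where "s = norm (v - y)"
    define Q where "Q = exp (- b * ((norm (v - c))\<^sup>2 - (norm (y - c))\<^sup>2)\<^sup>2 / (norm (v - y))\<^sup>2)"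
    have s: "s > 0" using False by (simp add: s_def)
    have Hk_eq: "Hk a b p c v y = s powr (-p) * exp (- a * s\<^sup>2) * Q"
      using False by (simp add: Hk_def s_def Q_def)
    have Q0: "Q \<ge> 0" by (simp add: Q_def)
    have PhiQ: "Phi b R c v y = Q" if "s \<le> R" for R
      using False that by (simp add: Phi_def Q_def s_def not_less)
    show ?thesis
    proof (cases "s \<le> 1")
      case True
      obtain N where N: "(1/2::real)^N < s" using real_arch_pow_inv[OF s, of "1/2"] by auto
      have "\<not> ri 0 < s" using True by (simp add: ri_def)
      then obtain n where n1: "\<not> ri n < s" and n2: "ri (Suc n) < s"
        using ex_least_nat_less[of "\<lambda>i. ri i < s" N] N by (auto simp: ri_def)
      have "s powr (-p) \<le> (ri (Suc n)) powr (-p)"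
        by (rule powr_mono2') (use p n2 ri0 in auto)
      also have "\<dots> = al n" by (simp only: ri_def al_def half_pow_powr Suc_eq_plus1)
      finally have sp: "s powr (-p) \<le> al n" .
      have "0 \<le> a * s\<^sup>2" using a by simp
      then have ea: "exp (- a * s\<^sup>2) \<le> 1" by simp
      have "s powr (-p) * exp (- a * s\<^sup>2) \<le> al n * 1"
        by (rule mult_mono[OF sp ea]) (auto simp: al0)
      then have "Hk a b p c v y \<le> al n * Q"
        unfolding Hk_eq using Q0 by (simp add: mult_right_mono)
      also have "\<dots> = al n * Phi b (ri n) c v y" using PhiQ[of "ri n"] n1 by simp
      finally have "ennreal (Hk a b p c v y) \<le> F n y"
        unfolding F_def using al0 by (simp add: ennreal_mult'[symmetric] ennreal_leI)
      also have "\<dots> \<le> (\<Sum>n. F n y)" by (rule term_le_suminf_ennreal)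
      also have "\<dots> \<le> (\<Sum>n. F n y) + (\<Sum>n. G n y)" by simp
      finally show ?thesis .
    next
      case False
      define n where "n = nat (\<lfloor>s\<rfloor> - 1)"
      have fl1: "\<lfloor>s\<rfloor> \<ge> 1" using False by simp
      have rn: "real n = of_int \<lfloor>s\<rfloor> - 1" using fl1 by (simp add: n_def)
      have n1: "real n + 1 \<le> s" using rn by simp
      have n2: "s \<le> ro n" using rn real_of_int_floor_add_one_gt[of s] unfolding ro_def by linarith
      have "s powr (-p) \<le> 1 powr (-p)"
        by (rule powr_mono2') (use p False in auto)
      then have sp: "s powr (-p) \<le> 1" by simp
      have "real n + 1 \<le> s\<^sup>2" using n1 False by (simp add: power2_eq_square) (smt (verit) mult_le_cancel_left1)
      then have "- a * s\<^sup>2 \<le> - a * real (n+1)" using a by simp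
      then have ea: "exp (- a * s\<^sup>2) \<le> be n" by (simp add: be_def)
      have "s powr (-p) * exp (- a * s\<^sup>2) \<le> 1 * be n"
        by (rule mult_mono[OF sp ea]) auto
      then have "Hk a b p c v y \<le> be n * Q"
        unfolding Hk_eq using Q0 by (simp add: mult_right_mono)
      also have "\<dots> = be n * Phi b (ro n) c v y" using PhiQ[of "ro n"] n2 by simp
      finally have "ennreal (Hk a b p c v y) \<le> G n y"
        unfolding G_def using be0 by (simp add: ennreal_mult'[symmetric] ennreal_leI)
      also have "\<dots> \<le> (\<Sum>n. G n y)" by (rule term_le_suminf_ennreal)
      also have "\<dots> \<le> (\<Sum>n. F n y) + (\<Sum>n. G n y)" by simp
      finally show ?thesis .
    qed
  qed
  have Fm[measurable]: "F n \<in> borel_measurable lborel" for n unfolding F_def by measurable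
  have Gm[measurable]: "G n \<in> borel_measurable lborel" for n unfolding G_def by measurable
  define X where "X = c3 * Ak p 3 + c4 * Ak p 4"
  define Y where "Y = c3 * Bk a 3 + c4 * Bk a 4"
  have Xs: "(\<lambda>n. al n * (c3 * ri n^3 + c4 * ri n^4)) sums X"
  proof -
    have "(\<lambda>n. c3 * (al n * ri n^3) + c4 * (al n * ri n^4)) sums X"
      unfolding X_def Ak_def al_def ri_def
      by (intro sums_add sums_mult summable_sums summ_geom_k p) auto
    then show ?thesis by (simp add: algebra_simps)
  qed
  have Ys: "(\<lambda>n. be n * (c3 * ro n^3 + c4 * ro n^4)) sums Y"
  proof -
    have "(\<lambda>n. c3 * (be n * ro n^3) + c4 * (be n * ro n^4)) sums Y"
      unfolding Y_def Bk_def be_def ro_def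
      by (intro sums_add sums_mult summable_sums summ_poly_exp_k a) auto
    then show ?thesis by (simp add: algebra_simps)
  qed
  have "(\<integral>\<^sup>+y. ennreal (Hk a b p c v y) \<partial>lborel) \<le> (\<integral>\<^sup>+y. (\<Sum>n. F n y) + (\<Sum>n. G n y) \<partial>lborel)"
    by (rule nn_integral_mono) (rule pw)
  also have "\<dots> = (\<integral>\<^sup>+y. (\<Sum>n. F n y) \<partial>lborel) + (\<integral>\<^sup>+y. (\<Sum>n. G n y) \<partial>lborel)"
    by (rule nn_integral_add) measurable
  also have "(\<integral>\<^sup>+y. (\<Sum>n. F n y) \<partial>lborel) = (\<Sum>n. \<integral>\<^sup>+y. F n y \<partial>lborel)"
    by (rule nn_integral_suminf) measurable
  also have "\<dots> \<le> (\<Sum>n. ennreal (al n * (c3 * ri n^3 + c4 * ri n^4)))"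
  proof (rule suminf_le)
    fix n
    have "(\<integral>\<^sup>+y. F n y \<partial>lborel) = ennreal (al n) * (\<integral>\<^sup>+y. ennreal (Phi b (ri n) c v y) \<partial>lborel)"
      unfolding F_def by (rule nn_integral_cmult) measurable
    also have "\<dots> \<le> ennreal (al n) * ennreal (c3 * ri n^3 + c4 * ri n^4)"
      by (rule mult_left_mono[OF hyp[OF ri0]]) simp
    also have "\<dots> = ennreal (al n * (c3 * ri n^3 + c4 * ri n^4))"
      by (rule ennreal_mult'[symmetric]) (rule al0)
    finally show "(\<integral>\<^sup>+y. F n y \<partial>lborel) \<le> ennreal (al n * (c3 * ri n^3 + c4 * ri n^4))" .
  qed auto
  also have "\<dots> = ennreal X"
  proof (rule suminf_ennreal_eq[OF _ Xs])
    fix n show "0 \<le> al n * (c3 * ri n^3 + c4 * ri n^4)"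
      by (intro mult_nonneg_nonneg add_nonneg_nonneg al0 c3 c4 zero_le_power less_imp_le[OF ri0])
  qed
  also have "(\<integral>\<^sup>+y. (\<Sum>n. G n y) \<partial>lborel) = (\<Sum>n. \<integral>\<^sup>+y. G n y \<partial>lborel)"
    by (rule nn_integral_suminf) measurable
  also have "\<dots> \<le> (\<Sum>n. ennreal (be n * (c3 * ro n^3 + c4 * ro n^4)))"
  proof (rule suminf_le)
    fix n
    have "(\<integral>\<^sup>+y. G n y \<partial>lborel) = ennreal (be n) * (\<integral>\<^sup>+y. ennreal (Phi b (ro n) c v y) \<partial>lborel)"
      unfolding G_def by (rule nn_integral_cmult) measurable
    also have "\<dots> \<le> ennreal (be n) * ennreal (c3 * ro n^3 + c4 * ro n^4)"
      by (rule mult_left_mono[OF hyp[OF ro0]]) simp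
    also have "\<dots> = ennreal (be n * (c3 * ro n^3 + c4 * ro n^4))"
      by (rule ennreal_mult'[symmetric]) (rule be0)
    finally show "(\<integral>\<^sup>+y. G n y \<partial>lborel) \<le> ennreal (be n * (c3 * ro n^3 + c4 * ro n^4))" .
  qed auto
  also have "\<dots> = ennreal Y"
  proof (rule suminf_ennreal_eq[OF _ Ys])
    fix n show "0 \<le> be n * (c3 * ro n^3 + c4 * ro n^4)"
      by (intro mult_nonneg_nonneg add_nonneg_nonneg be0 c3 c4 zero_le_power less_imp_le[OF ro0])
  qed
  also have "ennreal X + ennreal Y = ennreal (X + Y)"
  proof -
    have "X \<ge> 0" unfolding X_def using c3 c4 Ak_nonneg[OF p(2)] by (auto intro!: add_nonneg_nonneg mult_nonneg_nonneg)
    moreover have "Y \<ge> 0" unfolding Y_def using c3 c4 Bk_nonneg[OF a] by (auto intro!: add_nonneg_nonneg mult_nonneg_nonneg)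
    ultimately show ?thesis by (simp add: ennreal_plus)
  qed
  also have "X + Y = c3 * (Ak p 3 + Bk a 3) + c4 * (Ak p 4 + Bk a 4)"
    by (simp add: X_def Y_def algebra_simps)
  finally show ?thesis by (simp add: add_mono)
qed

lemma Hk_nonneg: "Hk a b p c v y \<ge> 0"
  by (simp add: Hk_def)

lemma core:
  fixes c :: "real^3"
  assumes a: "a > 0" and b: "b > 0" and p: "0 < p" "p < 3"
  shows "\<exists>C>0. \<forall>v. (\<integral>\<^sup>+y. ennreal (Hk a b p c v y) \<partial>lborel) \<le> ennreal (C / (1 + norm (v - c)))"
proof -
  define C1 where "C1 = 8 * (Ak p 3 + Bk a 3)"
  define C2 where "C2 = 4 * S1 b * (Ak p 3 + Bk a 3) + 2 * S0 b * (Ak p 4 + Bk a 4)"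
  have A3: "Ak p 3 \<ge> 0" "Ak p 4 \<ge> 0" using Ak_nonneg p by auto
  have B3: "Bk a 3 \<ge> 0" "Bk a 4 \<ge> 0" using Bk_nonneg a by auto
  have S: "S0 b \<ge> 0" "S1 b \<ge> 0" using S0_nonneg[OF b] S1_nonneg[OF b] by auto
  have C1: "C1 \<ge> 0" using A3 B3 by (simp add: C1_def)
  have C2: "C2 \<ge> 0" using A3 B3 S by (simp add: C2_def)
  define C where "C = 2 * (C1 + C2) + 1"
  have Cpos: "C > 0" using C1 C2 by (simp add: C_def)
  show ?thesis
  proof (intro exI conjI allI)
    show "C > 0" by (rule Cpos)
    fix v :: "real^3"
    define t where "t = norm (v - c)"
    have t0: "t \<ge> 0" by (simp add: t_def)
    have bd1: "(\<integral>\<^sup>+y. ennreal (Hk a b p c v y) \<partial>lborel) \<le> ennreal C1"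
    proof -
      have "(\<integral>\<^sup>+y. ennreal (Hk a b p c v y) \<partial>lborel)
              \<le> ennreal (8 * (Ak p 3 + Bk a 3) + 0 * (Ak p 4 + Bk a 4))"
        by (rule core_general[OF a b p]) (use Phi_bound1 b in auto)
      then show ?thesis by (simp add: C1_def)
    qed
    have "(\<integral>\<^sup>+y. ennreal (Hk a b p c v y) \<partial>lborel) \<le> ennreal (C / (1 + t))"
    proof (cases "t \<le> 1")
      case True
      have "t * C1 \<le> 1 * C1" using True C1 by (intro mult_right_mono) auto
      then have "C1 * (1 + t) \<le> C" using C1 C2 by (simp add: C_def algebra_simps)
      then have "C1 \<le> C / (1 + t)" using t0 by (simp add: pos_le_divide_eq)
      then show ?thesis using bd1 by (meson ennreal_leI order_trans)
    next
      case False
      then have t1: "t > 1" by simp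
      then have vc: "v \<noteq> c" by (auto simp: t_def)
      have "(\<integral>\<^sup>+y. ennreal (Hk a b p c v y) \<partial>lborel)
              \<le> ennreal ((4 * S1 b / t) * (Ak p 3 + Bk a 3) + (2 * S0 b / t) * (Ak p 4 + Bk a 4))"
        by (rule core_general[OF a b p]) (use Phi_bound2[OF _ b vc] S t1 in \<open>auto simp: t_def\<close>)
      also have "(4 * S1 b / t) * (Ak p 3 + Bk a 3) + (2 * S0 b / t) * (Ak p 4 + Bk a 4) = C2 / t"
        using t1 by (simp add: C2_def field_simps)
      also have "C2 / t \<le> C / (1 + t)"
      proof -
        have "C2 * (1 + t) \<le> C2 * (2 * t)" using t1 C2 by (intro mult_left_mono) auto
        also have "C2 * (2 * t) = (2 * C2) * t" by simp
        also have "\<dots> \<le> C * t" using t1 C1 C2 by (intro mult_right_mono) (auto simp: C_def)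
        finally have key: "C2 * (1 + t) \<le> C * t" .
        show ?thesis using key t1 by (simp add: field_simps)
      qed
      finally show ?thesis by (simp add: ennreal_leI)
    qed
    then show "(\<integral>\<^sup>+y. ennreal (Hk a b p c v y) \<partial>lborel) \<le> ennreal (C / (1 + norm (v - c)))"
      by (simp add: t_def)
  qed
qed

lemma expo_bound:
  fixes v y c :: "real^3"
  assumes b: "b > 0" and q: "q \<ge> 0" and yv: "y \<noteq> v"
  shows "exp (- b * ((norm (v - c))\<^sup>2 - (norm (y - c))\<^sup>2)\<^sup>2 / (norm (v - y))\<^sup>2) * (1 + norm (v - c)) powr q
         \<le> 2 powr q * exp (q\<^sup>2 / b) * (1 + norm (y - c)) powr q"
proof -
  define t where "t = norm (v - c)"
  define r where "r = norm (y - c)"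
  define s where "s = norm (v - y)"
  define X where "X = t\<^sup>2 - r\<^sup>2"
  have s: "s > 0" using yv by (simp add: s_def)
  have t0: "t \<ge> 0" "r \<ge> 0" by (simp_all add: t_def r_def)
  have "0 \<le> b * X\<^sup>2 / s\<^sup>2" using b by simp
  then have E1: "exp (- b * X\<^sup>2 / s\<^sup>2) \<le> 1" by simp
  have P1: "1 \<le> (1 + r) powr q" by (rule ge_one_powr_ge_zero) (use t0 q in auto)
  have P2: "1 \<le> 2 powr q" by (rule ge_one_powr_ge_zero) (use q in auto)
  have P3: "1 \<le> exp (q\<^sup>2 / b)" using b by simp
  have RHS: "(1 + r) powr q \<le> 2 powr q * exp (q\<^sup>2 / b) * (1 + r) powr q"
  proof -
    have "1 * 1 \<le> 2 powr q * exp (q\<^sup>2 / b)" by (rule mult_mono[OF P2 P3]) auto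
    then show ?thesis using P1 by (simp add: mult_le_cancel_right1)
  qed
  have "exp (- b * X\<^sup>2 / s\<^sup>2) * (1 + t) powr q \<le> 2 powr q * exp (q\<^sup>2 / b) * (1 + r) powr q"
  proof (cases "r \<ge> t / 2")
    case True
    have "(1 + t) powr q \<le> (2 * (1 + r)) powr q" by (rule powr_mono2) (use True q t0 in auto)
    also have "\<dots> = 2 powr q * (1 + r) powr q" by (rule powr_mult)
    finally have h: "(1 + t) powr q \<le> 2 powr q * (1 + r) powr q" .
    have "exp (- b * X\<^sup>2 / s\<^sup>2) * (1 + t) powr q \<le> 1 * (2 powr q * (1 + r) powr q)"
      by (rule mult_mono[OF E1 h]) auto
    also have "\<dots> \<le> 2 powr q * exp (q\<^sup>2 / b) * (1 + r) powr q"
      using mult_left_mono[OF P3, of "2 powr q * (1 + r) powr q"] by (simp add: mult_ac)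
    finally show ?thesis .
  next
    case False
    then have rt: "r < t / 2" by simp
    have tpos: "t > 0" using rt t0 by linarith
    have "r\<^sup>2 \<le> (t / 2)\<^sup>2" using rt t0 by (intro power_mono) auto
    then have Xg: "3/4 * t\<^sup>2 \<le> X" by (simp add: X_def power_divide)
    have "s \<le> t + r" unfolding s_def t_def r_def
      using norm_triangle_ineq4[of "v - c" "y - c"] by simp
    then have sle: "s \<le> 3/2 * t" using rt by simp
    have s2: "s\<^sup>2 \<le> (3/2 * t)\<^sup>2" using sle s by (intro power_mono) auto
    have X2: "(3/4 * t\<^sup>2)\<^sup>2 \<le> X\<^sup>2" using Xg tpos by (intro power_mono) auto
    have "t\<^sup>2/4 * s\<^sup>2 \<le> t\<^sup>2/4 * (3/2 * t)\<^sup>2" using s2 by (intro mult_left_mono) auto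
    also have "\<dots> = (3/4 * t\<^sup>2)\<^sup>2" by (simp add: power2_eq_square)
    also have "\<dots> \<le> X\<^sup>2" by (rule X2)
    finally have "t\<^sup>2/4 \<le> X\<^sup>2 / s\<^sup>2" using s by (simp add: pos_le_divide_eq)
    then have "b * (t\<^sup>2/4) \<le> b * (X\<^sup>2 / s\<^sup>2)" using b by (intro mult_left_mono) auto
    then have E2: "exp (- b * X\<^sup>2 / s\<^sup>2) \<le> exp (- b * t\<^sup>2 / 4)" by simp
    have "(1 + t) powr q = exp (q * ln (1 + t))" using t0 by (simp add: powr_def)
    also have "\<dots> \<le> exp (q * t)" using ln_add_one_self_le_self[OF t0(1)] q by (simp add: mult_left_mono)
    finally have P: "(1 + t) powr q \<le> exp (q * t)" .
    have sq: "q\<^sup>2 - b * (q * t - b * t\<^sup>2 / 4) = (q - b * t / 2)\<^sup>2"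
      by (simp add: power2_eq_square algebra_simps)
    have "b * (q * t - b * t\<^sup>2 / 4) \<le> q\<^sup>2" using sq zero_le_power2[of "q - b * t / 2"] by linarith
    then have "q * t - b * t\<^sup>2 / 4 \<le> q\<^sup>2 / b" using b by (simp add: pos_le_divide_eq mult.commute)
    then have E3: "exp (- b * t\<^sup>2 / 4) * exp (q * t) \<le> exp (q\<^sup>2 / b)"
      by (simp add: exp_add[symmetric])
    have "exp (- b * X\<^sup>2 / s\<^sup>2) * (1 + t) powr q \<le> exp (- b * t\<^sup>2 / 4) * exp (q * t)"
      by (rule mult_mono[OF E2 P]) auto
    also have "\<dots> \<le> exp (q\<^sup>2 / b)" by (rule E3)
    also have "\<dots> \<le> exp (q\<^sup>2 / b) * (2 powr q * (1 + r) powr q)"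
    proof -
      have "1 * 1 \<le> 2 powr q * (1 + r) powr q" by (rule mult_mono[OF P2 P1]) auto
      then show ?thesis by (simp add: mult_le_cancel_left1)
    qed
    also have "\<dots> = 2 powr q * exp (q\<^sup>2 / b) * (1 + r) powr q" by (simp add: mult_ac)
    finally show ?thesis .
  qed
  then show ?thesis by (simp add: X_def t_def r_def s_def)
qed

lemma one_plus_mu_pos:
  assumes "m > 0" "m1 > 0" "0 < \<epsilon>" "\<epsilon> < 1"
  shows "1 + mu_c m m1 \<epsilon> > 0"
proof -
  define al where "al = alpha_c m m1"
  define be where "be = 1 - beta_c \<epsilon>"
  have al: "0 < al" "al < 1" using assms by (auto simp: al_def alpha_c_def field_simps)
  have be: "0 < be" "be < 1" using assms by (auto simp: be_def beta_c_def field_simps)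
  define d where "d = al * be"
  have d: "0 < d" "d < 1" using al be mult_strict_mono[of al 1 be 1] by (auto simp: d_def)
  have "mu_c m m1 \<epsilon> = (1 - 2 * d) / d"
    by (simp add: mu_c_def d_def al_def be_def mult.assoc)
  then have "1 + mu_c m m1 \<epsilon> = (1 - d) / d" using d by (simp add: field_simps)
  then show ?thesis using d by simp
qed

lemma G_powr_eq:
  fixes v y u1 :: "real^3"
  assumes yv: "y \<noteq> v" and m1: "m1 > 0" and th: "\<theta>1 > 0"
  defines "\<kappa> \<equiv> m1 / (8 * \<theta>1)" and "c0 \<equiv> sqrt (m1 / (2 * pi * \<theta>1))"
  shows "\<bar>G_kernel m m1 \<epsilon> u1 \<theta>1 v y\<bar> powr p =
    c0 powr p * Hk (p * \<kappa> * (1 + mu_c m m1 \<epsilon>)\<^sup>2) (p * \<kappa> / 2) p u1 v y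
      * exp (- (p * \<kappa> / 2) * ((norm (v - u1))\<^sup>2 - (norm (y - u1))\<^sup>2)\<^sup>2 / (norm (v - y))\<^sup>2)"
proof -
  define s where "s = norm (v - y)"
  define X where "X = (norm (v - u1))\<^sup>2 - (norm (y - u1))\<^sup>2"
  define A where "A = (1 + mu_c m m1 \<epsilon>)\<^sup>2"
  define E where "E = - \<kappa> * (A * s\<^sup>2 + X\<^sup>2 / s\<^sup>2)"
  have s: "s > 0" using yv by (simp add: s_def)
  have c0: "c0 > 0" using m1 th by (simp add: c0_def)
  have Geq: "G_kernel m m1 \<epsilon> u1 \<theta>1 v y = c0 / s * exp E"
    using yv by (simp add: G_kernel_def c0_def s_def E_def \<kappa>_def A_def X_def)
  have Gpos: "c0 / s * exp E \<ge> 0" using c0 s by simp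
  have "\<bar>G_kernel m m1 \<epsilon> u1 \<theta>1 v y\<bar> powr p = (c0 / s * exp E) powr p"
    by (simp only: Geq abs_of_nonneg[OF Gpos])
  also have "\<dots> = (c0 / s) powr p * (exp E) powr p"
    by (rule powr_mult)
  also have "\<dots> = c0 powr p / s powr p * exp (E * p)"
    using c0 s by (simp add: powr_divide exp_powr_real)
  also have "E * p = - (p * \<kappa> * A) * s\<^sup>2 + (- (p * \<kappa> / 2) * X\<^sup>2 / s\<^sup>2) + (- (p * \<kappa> / 2) * X\<^sup>2 / s\<^sup>2)"
    using s by (simp add: E_def field_simps)
  also have "exp (- (p * \<kappa> * A) * s\<^sup>2 + (- (p * \<kappa> / 2) * X\<^sup>2 / s\<^sup>2) + (- (p * \<kappa> / 2) * X\<^sup>2 / s\<^sup>2))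
      = exp (- (p * \<kappa> * A) * s\<^sup>2) * exp (- (p * \<kappa> / 2) * X\<^sup>2 / s\<^sup>2) * exp (- (p * \<kappa> / 2) * X\<^sup>2 / s\<^sup>2)"
    by (simp only: exp_add)
  also have "Hk (p * \<kappa> * A) (p * \<kappa> / 2) p u1 v y
      = s powr (-p) * exp (- (p * \<kappa> * A) * s\<^sup>2) * exp (- (p * \<kappa> / 2) * X\<^sup>2 / s\<^sup>2)"
    using yv by (simp add: Hk_def s_def X_def)
  moreover have "s powr (-p) = 1 / s powr p" by (simp add: powr_minus divide_inverse)
  ultimately show ?thesis
    by (simp add: A_def[symmetric] X_def[symmetric] s_def[symmetric] mult_ac)
qed

theorem lemma3p2:
  fixes m m1 \<epsilon> \<theta>1 p q :: real and u1 :: "real^3"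
  assumes "m > 0" "m1 > 0" "0 < \<epsilon>" "\<epsilon> < 1" "\<theta>1 > 0"
    and "0 < p" "p < 3" "q \<ge> 0"
  shows "\<exists>C>0. \<forall>v :: real^3.
           (\<integral>\<^sup>+ v'. ennreal (\<bar>G_kernel m m1 \<epsilon> u1 \<theta>1 v v'\<bar> powr p
                               / (1 + norm (v' - u1)) powr q) \<partial>lborel)
           \<le> ennreal (C / (1 + norm (v - u1)) powr (q + 1))"
proof -
  note asm = assms
  define \<kappa> where "\<kappa> = m1 / (8 * \<theta>1)"
  define c0 where "c0 = sqrt (m1 / (2 * pi * \<theta>1))"
  define A where "A = (1 + mu_c m m1 \<epsilon>)\<^sup>2"
  define a where "a = p * \<kappa> * A"
  define b where "b = p * \<kappa> / 2"
  have kpos: "\<kappa> > 0" using asm by (simp add: \<kappa>_def)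
  have Apos: "A > 0" using one_plus_mu_pos[OF asm(1-4)] by (simp add: A_def)
  have apos: "a > 0" using kpos Apos asm by (simp add: a_def)
  have bpos: "b > 0" using kpos asm by (simp add: b_def)
  have c0: "c0 > 0" using asm by (simp add: c0_def)
  obtain Cc where Cc: "Cc > 0"
    and Ccb: "\<And>v. (\<integral>\<^sup>+y. ennreal (Hk a b p u1 v y) \<partial>lborel) \<le> ennreal (Cc / (1 + norm (v - u1)))"
    using core[OF apos bpos asm(6,7), of u1] by blast
  define D where "D = 2 powr q * exp (q\<^sup>2 / b)"
  have Dpos: "D > 0" by (simp add: D_def)
  define C where "C = c0 powr p * D * Cc"
  have Cpos: "C > 0" using c0 Dpos Cc by (simp add: C_def)
  show ?thesis
  proof (intro exI conjI allI)
    show "C > 0" by (rule Cpos)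
    fix v :: "real^3"
    define t where "t = norm (v - u1)"
    have t0: "t \<ge> 0" by (simp add: t_def)
    define K where "K = c0 powr p * D / (1 + t) powr q"
    have K0: "K \<ge> 0" using c0 Dpos t0 by (simp add: K_def)
    have pw: "\<bar>G_kernel m m1 \<epsilon> u1 \<theta>1 v y\<bar> powr p / (1 + norm (y - u1)) powr q \<le> K * Hk a b p u1 v y" for y
    proof (cases "y = v")
      case True
      then show ?thesis using asm by (simp add: G_kernel_def Hk_def)
    next
      case False
      define Ex where "Ex = exp (- b * ((norm (v - u1))\<^sup>2 - (norm (y - u1))\<^sup>2)\<^sup>2 / (norm (v - y))\<^sup>2)"
      define r where "r = norm (y - u1)"
      have r0: "r \<ge> 0" by (simp add: r_def)
      have Geq: "\<bar>G_kernel m m1 \<epsilon> u1 \<theta>1 v y\<bar> powr p = c0 powr p * Hk a b p u1 v y * Ex"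
        using G_powr_eq[OF False asm(2) asm(5), of m \<epsilon> u1 p]
        by (simp add: Ex_def a_def b_def A_def \<kappa>_def c0_def)
      have Q: "Ex * (1 + t) powr q \<le> D * (1 + r) powr q"
        using expo_bound[OF bpos asm(8) False, of u1] by (simp add: Ex_def D_def t_def r_def)
      have pq1: "(1 + t) powr q > 0" "(1 + r) powr q > 0" using t0 r0 by auto
      have Q': "Ex / (1 + r) powr q \<le> D / (1 + t) powr q"
        using Q pq1 by (simp add: divide_simps)
      have "\<bar>G_kernel m m1 \<epsilon> u1 \<theta>1 v y\<bar> powr p / (1 + norm (y - u1)) powr q
            = (c0 powr p * Hk a b p u1 v y) * (Ex / (1 + r) powr q)"
        by (simp add: Geq r_def)
      also have "\<dots> \<le> (c0 powr p * Hk a b p u1 v y) * (D / (1 + t) powr q)"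
        by (rule mult_left_mono[OF Q']) (simp add: Hk_nonneg)
      also have "\<dots> = K * Hk a b p u1 v y" by (simp add: K_def)
      finally show ?thesis .
    qed
    have "(\<integral>\<^sup>+ v'. ennreal (\<bar>G_kernel m m1 \<epsilon> u1 \<theta>1 v v'\<bar> powr p / (1 + norm (v' - u1)) powr q) \<partial>lborel)
          \<le> (\<integral>\<^sup>+ y. ennreal K * ennreal (Hk a b p u1 v y) \<partial>lborel)"
    proof (rule nn_integral_mono)
      fix y
      have "ennreal (\<bar>G_kernel m m1 \<epsilon> u1 \<theta>1 v y\<bar> powr p / (1 + norm (y - u1)) powr q) \<le> ennreal (K * Hk a b p u1 v y)"
        by (rule ennreal_leI[OF pw])
      also have "\<dots> = ennreal K * ennreal (Hk a b p u1 v y)" by (rule ennreal_mult'[OF K0])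
      finally show "ennreal (\<bar>G_kernel m m1 \<epsilon> u1 \<theta>1 v y\<bar> powr p / (1 + norm (y - u1)) powr q) \<le> ennreal K * ennreal (Hk a b p u1 v y)" .
    qed
    also have "\<dots> = ennreal K * (\<integral>\<^sup>+ y. ennreal (Hk a b p u1 v y) \<partial>lborel)"
      by (rule nn_integral_cmult) measurable
    also have "\<dots> \<le> ennreal K * ennreal (Cc / (1 + t))"
      by (rule mult_left_mono[OF Ccb[of v, folded t_def]]) simp
    also have "\<dots> = ennreal (K * (Cc / (1 + t)))" by (rule ennreal_mult'[symmetric, OF K0])
    also have "K * (Cc / (1 + t)) = C / (1 + norm (v - u1)) powr (q + 1)"
    proof -
      have "(1 + t) powr (q + 1) = (1 + t) powr q * (1 + t)" using t0 by (simp add: powr_add)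
      then show ?thesis using t0 by (simp add: K_def C_def t_def[symmetric])
    qed
    finally show "(\<integral>\<^sup>+ v'. ennreal (\<bar>G_kernel m m1 \<epsilon> u1 \<theta>1 v v'\<bar> powr p / (1 + norm (v' - u1)) powr q) \<partial>lborel)
           \<le> ennreal (C / (1 + norm (v - u1)) powr (q + 1))" .
  qed
qed

end
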